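(* Let $\lambda$ be an infinite cardinal with $\lambda^{\aleph_0}=\lambda$, and let $t_k:\lambda^+\to\lambda^+$ ($k<\omega$) be functions. Then there is a function $F:\lambda^+\to\lambda$ such that whenever $\alpha\neq\beta$ are ordinals below $\lambda^+$ with $F(\alpha)=F(\beta)$, there are no $i,j<\omega$ with $\alpha<t_i(\beta)<t_j(\alpha)$. *)

theory Defs
  imports Main
begin

end

theory Submission
  imports Defs
begin

unbundle cardinal_syntax

lemma underS_small:
  assumes "Card_order r" "\<delta> \<in> Field (cardSuc r)"
  shows "|underS (cardSuc r) \<delta>| \<le>o r"
proof -
  have "|underS (cardSuc r) \<delta>| <o cardSuc r"
    using card_of_underS[OF cardSuc_Card_order[OF assms(1)] assms(2)] .
  thus ?thesis using cardSuc_ordLeq_ordLess[OF assms(1) card_of_Card_order] by blast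
qed

lemma bounded_small:
  assumes r: "Card_order r" and inf: "\<not> finite (Field r)"
    and S: "S \<subseteq> Field (cardSuc r)" "|S| \<le>o r"
  shows "\<exists>\<delta>\<in>Field (cardSuc r). \<forall>s\<in>S. (s, \<delta>) \<in> cardSuc r \<and> s \<noteq> \<delta>"
proof (rule ccontr)
  let ?W = "cardSuc r"
  let ?A = "Field ?W"
  interpret W: wo_rel ?W using cardSuc_Well_order[OF r] wo_rel_def by blast
  assume "\<not> ?thesis"
  hence H: "\<forall>\<delta>\<in>?A. \<exists>s\<in>S. \<not> ((s, \<delta>) \<in> ?W \<and> s \<noteq> \<delta>)" by blast
  have sub: "?A \<subseteq> S \<union> (\<Union>s\<in>S. underS ?W s)"
  proof
    fix a assume a: "a \<in> ?A"
    then obtain s where s: "s \<in> S" "\<not> ((s, a) \<in> ?W \<and> s \<noteq> a)" using H by blast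
    show "a \<in> S \<union> (\<Union>s\<in>S. underS ?W s)"
    proof (cases "s = a")
      case True thus ?thesis using s by auto
    next
      case False
      hence "(a, s) \<in> ?W" using s W.TOTALS a S(1) by blast
      thus ?thesis using False s unfolding underS_def by auto
    qed
  qed
  have Fr: "|Field r| =o r" using card_of_Field_ordIso[OF r] .
  have "\<forall>s\<in>S. |underS ?W s| \<le>o |Field r|"
    using underS_small[OF r] S(1) Fr ordLeq_ordIso_trans ordIso_symmetric by blast
  moreover have "|S| \<le>o |Field r|" using S(2) Fr ordLeq_ordIso_trans ordIso_symmetric by blast
  ultimately have "|\<Union>s\<in>S. underS ?W s| \<le>o |Field r|"
    using card_of_UNION_ordLeq_infinite[OF inf] by blast
  hence U: "|\<Union>s\<in>S. underS ?W s| \<le>o r" using Fr ordLeq_ordIso_trans by blast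
  have "|S \<union> (\<Union>s\<in>S. underS ?W s)| \<le>o r"
    using card_of_Un_ordLeq_infinite_Field[OF inf S(2) U r] .
  hence "|?A| \<le>o r" using card_of_mono1[OF sub] ordLeq_transitive by blast
  moreover have "?W \<le>o |?A|"
    using card_of_Field_ordIso[OF cardSuc_Card_order[OF r]] ordIso_iff_ordLeq by blast
  ultimately have "?W \<le>o r" using ordLeq_transitive by blast
  thus False using cardSuc_greater[OF r] not_ordLess_ordLeq by blast
qed

lemma closure_exists:
  fixes t :: "nat \<Rightarrow> 'a set \<Rightarrow> 'a set" and r :: "'a rel"
  assumes r: "Card_order r" and inf: "\<not> finite (Field r)"
    and t: "\<And>k. t k ` Field (cardSuc r) \<subseteq> Field (cardSuc r)"
    and x: "x \<in> Field (cardSuc r)"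
  shows "\<exists>\<delta>\<in>Field (cardSuc r). (x, \<delta>) \<in> cardSuc r \<and> x \<noteq> \<delta> \<and>
     (\<forall>y k. (y, \<delta>) \<in> cardSuc r \<and> y \<noteq> \<delta> \<longrightarrow> (t k y, \<delta>) \<in> cardSuc r \<and> t k y \<noteq> \<delta>)"
proof -
  let ?W = "cardSuc r"
  let ?A = "Field ?W"
  interpret W: wo_rel ?W using cardSuc_Well_order[OF r] wo_rel_def by blast
  define b where "b S = (SOME \<delta>. \<delta> \<in> ?A \<and> (\<forall>s\<in>S. (s, \<delta>) \<in> ?W \<and> s \<noteq> \<delta>))" for S
  have bP: "b S \<in> ?A \<and> (\<forall>s\<in>S. (s, b S) \<in> ?W \<and> s \<noteq> b S)" if "S \<subseteq> ?A" "|S| \<le>o r" for S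
    using bounded_small[OF r inf that] unfolding b_def by (rule someI2_bex) blast
  have Fr: "|Field r| =o r" using card_of_Field_ordIso[OF r] .
  have nat_le: "|UNIV :: nat set| \<le>o |Field r|"
    using inf infinite_iff_natLeq_ordLeq card_of_nat ordIso_ordLeq_trans by blast
  define D where "D n = rec_nat (b {x}) (\<lambda>_ d. b (insert d (\<Union>k. t k ` underS ?W d))) n" for n
  have D0: "D 0 = b {x}" and DS: "D (Suc n) = b (insert (D n) (\<Union>k. t k ` underS ?W (D n)))" for n
    unfolding D_def by simp_all
  have small_step: "insert d (\<Union>k. t k ` underS ?W d) \<subseteq> ?A \<and> |insert d (\<Union>k. t k ` underS ?W d)| \<le>o r"
    if d: "d \<in> ?A" for d
  proof
    have "underS ?W d \<subseteq> ?A" unfolding underS_def Field_def by auto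
    thus "insert d (\<Union>k. t k ` underS ?W d) \<subseteq> ?A" using t d by blast
    have "\<forall>k\<in>UNIV. |t k ` underS ?W d| \<le>o |Field r|"
      using card_of_image underS_small[OF r d] Fr ordLeq_transitive ordLeq_ordIso_trans ordIso_symmetric by blast
    hence "|\<Union>k. t k ` underS ?W d| \<le>o |Field r|"
      using card_of_UNION_ordLeq_infinite[OF inf nat_le, of "\<lambda>k. t k ` underS ?W d"] by blast
    hence U: "|\<Union>k. t k ` underS ?W d| \<le>o r" using Fr ordLeq_ordIso_trans by blast
    have "|{d}| \<le>o r"
      using card_of_singl_ordLeq[of "Field r" d] inf Fr ordLeq_ordIso_trans by fastforce
    hence "|{d} \<union> (\<Union>k. t k ` underS ?W d)| \<le>o r"
      using card_of_Un_ordLeq_infinite_Field[OF inf _ U r] by blast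
    thus "|insert d (\<Union>k. t k ` underS ?W d)| \<le>o r" by simp
  qed
  have x1: "|{x}| \<le>o r"
    using card_of_singl_ordLeq[of "Field r" x] inf Fr ordLeq_ordIso_trans by fastforce
  have DA: "D n \<in> ?A" for n
  proof (induction n)
    case 0 thus ?case using bP[of "{x}"] x x1 D0 by auto
  next
    case (Suc n) thus ?case using bP small_step[OF Suc] DS by auto
  qed
  have xD: "(x, D 0) \<in> ?W \<and> x \<noteq> D 0" using bP[of "{x}"] x x1 D0 by auto
  have DSP: "\<forall>s \<in> insert (D n) (\<Union>k. t k ` underS ?W (D n)). (s, D (Suc n)) \<in> ?W \<and> s \<noteq> D (Suc n)" for n
    using bP small_step[OF DA[of n]] DS by auto
  have rD: "range D \<subseteq> ?A" using DA by auto
  have "|range D| \<le>o r"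
    using card_of_image[of D "UNIV :: nat set"] nat_le Fr ordLeq_transitive ordLeq_ordIso_trans by blast
  then have bs: "b (range D) \<in> ?A \<and> (\<forall>n. (D n, b (range D)) \<in> ?W \<and> D n \<noteq> b (range D))"
    using bP[OF rD] by auto
  define X where "X = (\<Union>n. underS ?W (D n))"
  have XA: "X \<subseteq> ?A" unfolding X_def underS_def Field_def by auto
  have notin: "b (range D) \<notin> X"
  proof
    assume "b (range D) \<in> X"
    then obtain n where "(b (range D), D n) \<in> ?W" "b (range D) \<noteq> D n" unfolding X_def underS_def by auto
    thus False using bs W.ANTISYM unfolding antisym_def by blast
  qed
  define \<delta> where "\<delta> = W.minim (?A - X)"
  have ne: "?A - X \<noteq> {}" using notin bs by blast
  have \<delta>A: "\<delta> \<in> ?A - X" unfolding \<delta>_def using W.minim_in[of "?A - X"] ne by blast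
  have \<delta>least: "(\<delta>, z) \<in> ?W" if "z \<in> ?A - X" for z
    unfolding \<delta>_def using W.minim_least[of "?A - X" z] ne that by blast
  have down: "w \<in> X" if "(w, z) \<in> ?W" and zX: "z \<in> X" for w z
  proof -
    obtain n where n: "(z, D n) \<in> ?W" "z \<noteq> D n" using zX unfolding X_def underS_def by auto
    have "(w, D n) \<in> ?W" using that(1) n(1) W.TRANS unfolding trans_def by blast
    moreover have "w \<noteq> D n" using that(1) n W.ANTISYM unfolding antisym_def by blast
    ultimately show ?thesis unfolding X_def underS_def by auto
  qed
  have ltX: "y \<in> X" if "(y, \<delta>) \<in> ?W" "y \<noteq> \<delta>" for y
  proof (rule ccontr)
    assume "y \<notin> X"
    moreover have "y \<in> ?A" using that(1) unfolding Field_def by auto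
    ultimately have "(\<delta>, y) \<in> ?W" using \<delta>least by blast
    thus False using that W.ANTISYM unfolding antisym_def by blast
  qed
  have Xlt: "(z, \<delta>) \<in> ?W \<and> z \<noteq> \<delta>" if "z \<in> X" for z
  proof -
    have "z \<in> ?A" using that XA by auto
    hence "(z, \<delta>) \<in> ?W \<or> (\<delta>, z) \<in> ?W" using W.TOTALS \<delta>A by blast
    moreover have "(\<delta>, z) \<notin> ?W" using down[of \<delta> z] that \<delta>A by blast
    ultimately show ?thesis using that \<delta>A by auto
  qed
  have closed: "t k y \<in> X" if yX: "y \<in> X" for y k
  proof -
    obtain n where "y \<in> underS ?W (D n)" using yX unfolding X_def by auto
    hence "(t k y, D (Suc n)) \<in> ?W \<and> t k y \<noteq> D (Suc n)" using DSP[of n] by blast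
    thus ?thesis unfolding X_def underS_def by auto
  qed
  have "x \<in> X" using xD unfolding X_def underS_def by auto
  show ?thesis
    apply (rule bexI[of _ \<delta>])
    using Xlt[OF \<open>x \<in> X\<close>] ltX closed Xlt \<delta>A by blast+
qed

lemma three_elems:
  assumes "\<not> finite S"
  shows "\<exists>a0 a1 a2. a0 \<in> S \<and> a1 \<in> S \<and> a2 \<in> S \<and> a0 \<noteq> a1 \<and> a0 \<noteq> a2 \<and> a1 \<noteq> a2"
proof -
  obtain a0 where a0: "a0 \<in> S" using assms infinite_imp_nonempty by blast
  have "\<not> finite (S - {a0})" using assms by simp
  then obtain a1 where a1: "a1 \<in> S - {a0}" using infinite_imp_nonempty by blast
  have "\<not> finite (S - {a0, a1})" using assms by simp
  then obtain a2 where a2: "a2 \<in> S - {a0, a1}" using infinite_imp_nonempty by blast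
  show ?thesis using a0 a1 a2 by blast
qed

theorem lemma1:
  fixes r :: "'a rel"
    and t :: "nat \<Rightarrow> 'a set \<Rightarrow> 'a set"
  assumes "Card_order r"
    and "\<not> finite (Field r)"
    and "(BNF_Cardinal_Arithmetic.cexp r natLeq, r) \<in> ordIso"
    and "\<And>k. t k ` Field (cardSuc r) \<subseteq> Field (cardSuc r)"
  shows "\<exists>F. F ` Field (cardSuc r) \<subseteq> Field r \<and>
    (\<forall>\<alpha>\<in>Field (cardSuc r). \<forall>\<beta>\<in>Field (cardSuc r).
       \<alpha> \<noteq> \<beta> \<and> F \<alpha> = F \<beta> \<longrightarrow>
       \<not> (\<exists>i j. (\<alpha>, t i \<beta>) \<in> cardSuc r \<and> \<alpha> \<noteq> t i \<beta> \<and>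
                    (t i \<beta>, t j \<alpha>) \<in> cardSuc r \<and> t i \<beta> \<noteq> t j \<alpha>))"
proof -
  note r = assms(1) and inf = assms(2) and cexp = assms(3) and tA = assms(4)
  let ?W = "cardSuc r"
  let ?A = "Field ?W"
  interpret W: wo_rel ?W using cardSuc_Well_order[OF r] wo_rel_def by blast
  define lt where "lt y z \<longleftrightarrow> (y, z) \<in> ?W \<and> y \<noteq> z" for y z
  have ltA: "y \<in> ?A" "z \<in> ?A" if "lt y z" for y z using that unfolding lt_def Field_def by auto
  have lt_trans: "lt x z" if "lt x y" "lt y z" for x y z
    using that transD[OF W.TRANS] antisymD[OF W.ANTISYM] unfolding lt_def by metis
  have lt_le_trans: "lt x z" if "lt x y" "(y, z) \<in> ?W" for x y z
    using that transD[OF W.TRANS] antisymD[OF W.ANTISYM] unfolding lt_def by metis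
  have le_lt_trans: "lt x z" if "(x, y) \<in> ?W" "lt y z" for x y z
    using that transD[OF W.TRANS] antisymD[OF W.ANTISYM] unfolding lt_def by metis
  have lt_total: "lt x y \<or> x = y \<or> lt y x" if "x \<in> ?A" "y \<in> ?A" for x y
    using that W.TOTALS unfolding lt_def by auto
  have lt_irr: "\<not> (lt x y \<and> lt y x)" for x y
    unfolding lt_def using antisymD[OF W.ANTISYM] by blast
  define cl where "cl d \<longleftrightarrow> d \<in> ?A \<and> (\<forall>y k. lt y d \<longrightarrow> lt (t k y) d)" for d
  have clex: "\<exists>d. cl d \<and> lt x d" if xA: "x \<in> ?A" for x
  proof -
    have ex: "\<exists>d\<in>?A. (x, d) \<in> ?W \<and> x \<noteq> d \<and>
       (\<forall>y k. (y, d) \<in> ?W \<and> y \<noteq> d \<longrightarrow> (t k y, d) \<in> ?W \<and> t k y \<noteq> d)"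
      by (rule closure_exists[OF r inf tA xA])
    then obtain d where d1: "d \<in> ?A" and d2: "(x, d) \<in> ?W \<and> x \<noteq> d \<and>
       (\<forall>y k. (y, d) \<in> ?W \<and> y \<noteq> d \<longrightarrow> (t k y, d) \<in> ?W \<and> t k y \<noteq> d)"
      by (rule bexE)
    have "cl d" unfolding cl_def lt_def using d1 d2 by blast
    moreover have "lt x d" unfolding lt_def using d2 by blast
    ultimately show ?thesis by blast
  qed
  define nxt where "nxt x = W.minim {d. cl d \<and> lt x d}" for x
  have nxt1: "cl (nxt x) \<and> lt x (nxt x)" if "x \<in> ?A" for x
  proof -
    have "{d. cl d \<and> lt x d} \<subseteq> ?A" "{d. cl d \<and> lt x d} \<noteq> {}" using clex[OF that] unfolding cl_def by auto
    thus ?thesis unfolding nxt_def using W.minim_in by blast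
  qed
  have nxt2: "(nxt x, d) \<in> ?W" if "x \<in> ?A" "cl d" "lt x d" for x d
  proof -
    have "{d. cl d \<and> lt x d} \<subseteq> ?A" "{d. cl d \<and> lt x d} \<noteq> {}" using clex[OF that(1)] unfolding cl_def by auto
    thus ?thesis unfolding nxt_def using W.minim_least that(2,3) by blast
  qed
  have nxtA: "nxt x \<in> ?A" if "x \<in> ?A" for x using nxt1[OF that] unfolding cl_def by blast
  have tA': "t k x \<in> ?A" if "x \<in> ?A" for x k using tA that by blast
  have "r <o |Pow (Field r)|"
    using card_of_Field_ordIso[OF r] card_of_Pow ordIso_ordLess_trans ordIso_symmetric by blast
  hence "?W \<le>o |Pow (Field r)|" using cardSuc_least[OF r card_of_Card_order] by blast
  hence "|?A| \<le>o |Pow (Field r)|"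
    using card_of_Field_ordIso[OF cardSuc_Card_order[OF r]] ordIso_ordLeq_trans by blast
  hence "\<exists>f. inj_on f ?A \<and> f ` ?A \<subseteq> Pow (Field r)" by (simp only: card_of_ordLeq[symmetric])
  then obtain f where f: "inj_on f ?A" "f ` ?A \<subseteq> Pow (Field r)" by blast
  define chi where "chi a b = (SOME d. (d \<in> f a) \<noteq> (d \<in> f b))" for a b
  have chiP: "(chi a b \<in> f a) \<noteq> (chi a b \<in> f b) \<and> chi a b \<in> Field r"
    if "a \<in> ?A" "b \<in> ?A" "a \<noteq> b" for a b
  proof -
    have "f a \<noteq> f b" using f(1) that unfolding inj_on_def by blast
    hence "\<exists>d. (d \<in> f a) \<noteq> (d \<in> f b)" by blast
    hence "(chi a b \<in> f a) \<noteq> (chi a b \<in> f b)" unfolding chi_def by (rule someI_ex)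
    moreover have "f a \<subseteq> Field r" "f b \<subseteq> Field r" using f(2) that by auto
    ultimately show ?thesis by blast
  qed
  define psi where "psi x i = (if nxt (t i x) \<noteq> nxt x
     then Some (chi (nxt (t i x)) (nxt x), chi (nxt (t i x)) (nxt x) \<in> f (nxt x)) else None)" for x i
  define e where "e x = (SOME h. inj_on h (underS ?W (nxt x)) \<and> h ` underS ?W (nxt x) \<subseteq> Field r) x" for x
  have eP: "inj_on (SOME h. inj_on h (underS ?W d) \<and> h ` underS ?W d \<subseteq> Field r) (underS ?W d) \<and>
      (SOME h. inj_on h (underS ?W d) \<and> h ` underS ?W d \<subseteq> Field r) ` underS ?W d \<subseteq> Field r"
    if "d \<in> ?A" for d
  proof -
    have "|underS ?W d| \<le>o |Field r|"
      using underS_small[OF r that] card_of_Field_ordIso[OF r] ordLeq_ordIso_trans ordIso_symmetric by blast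
    hence "\<exists>h. inj_on h (underS ?W d) \<and> h ` underS ?W d \<subseteq> Field r" by (simp only: card_of_ordLeq[symmetric])
    thus ?thesis by (rule someI_ex)
  qed
  have e_in: "e x \<in> Field r" if "x \<in> ?A" for x
  proof -
    have "x \<in> underS ?W (nxt x)" using nxt1[OF that] unfolding lt_def underS_def by auto
    thus ?thesis using eP[OF nxtA[OF that]] unfolding e_def by blast
  qed
  have e_inj: "x = y" if "x \<in> ?A" "y \<in> ?A" "nxt x = nxt y" "e x = e y" for x y
  proof -
    define h where "h = (SOME h. inj_on h (underS ?W (nxt x)) \<and> h ` underS ?W (nxt x) \<subseteq> Field r)"
    have xi: "x \<in> underS ?W (nxt x)" and yi: "y \<in> underS ?W (nxt x)"
      using nxt1[OF that(1)] nxt1[OF that(2)] that(3) unfolding lt_def underS_def by auto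
    have "e x = h x" "e y = h y" unfolding e_def h_def using that(3) by simp_all
    hence hxy: "h x = h y" using that(4) by simp
    have "inj_on h (underS ?W (nxt x))" using eP[OF nxtA[OF that(1)]] unfolding h_def by blast
    from inj_onD[OF this hxy xi yi] show ?thesis .
  qed
  obtain a0 a1 a2 where a: "a0 \<in> Field r \<and> a1 \<in> Field r \<and> a2 \<in> Field r \<and> a0 \<noteq> a1 \<and> a0 \<noteq> a2 \<and> a1 \<noteq> a2"
    using three_elems[OF inf] by blast
  define tag where "tag opt = (case opt of None \<Rightarrow> a0 | Some (d, b) \<Rightarrow> (if b then a1 else a2))" for opt :: "('a \<times> bool) option"
  define val where "val opt = (case opt of None \<Rightarrow> a0 | Some (d, b) \<Rightarrow> d)" for opt :: "('a \<times> bool) option"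
  have tagval: "o1 = o2" if "tag o1 = tag o2" "val o1 = val o2" for o1 o2
    using that a unfolding tag_def val_def by (auto split: option.splits if_splits)
  define G where "G x n = (case n of 0 \<Rightarrow> e x | Suc m \<Rightarrow> (if even m then tag (psi x (m div 2)) else val (psi x (m div 2))))" for x n
  have G_psi: "psi x i = psi y i" if "G x = G y" for x y i
  proof -
    have "G x (Suc (2 * i)) = G y (Suc (2 * i))" "G x (Suc (Suc (2 * i))) = G y (Suc (Suc (2 * i)))"
      using that by simp_all
    hence "tag (psi x i) = tag (psi y i)" "val (psi x i) = val (psi y i)"
      unfolding G_def by simp_all
    thus ?thesis using tagval by blast
  qed
  have G_e: "e x = e y" if "G x = G y" for x y
    using fun_cong[OF that, of 0] unfolding G_def by simp
  have G_Func: "G x \<in> Func (UNIV::nat set) (Field r)" if xA: "x \<in> ?A" for x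
  proof -
    have "tag (psi x i) \<in> Field r \<and> val (psi x i) \<in> Field r" for i
    proof (cases "nxt (t i x) = nxt x")
      case True then show ?thesis using a unfolding psi_def tag_def val_def by simp
    next
      case False
      have "chi (nxt (t i x)) (nxt x) \<in> Field r" using chiP[OF nxtA[OF tA'[OF xA]] nxtA[OF xA] False] by blast
      then show ?thesis using a False unfolding psi_def tag_def val_def by simp
    qed
    thus ?thesis using e_in[OF xA] unfolding Func_def G_def by (auto split: nat.splits)
  qed
  have c1: "|Func (UNIV::nat set) (Field r)| =o r" using cexp unfolding cexp_def Field_natLeq by simp
  have "|Func (UNIV::nat set) (Field r)| =o |Field r|"
    using ordIso_transitive[OF c1 ordIso_symmetric[OF card_of_Field_ordIso[OF r]]] .
  hence "|Func (UNIV::nat set) (Field r)| \<le>o |Field r|" using ordIso_iff_ordLeq by blast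
  hence "\<exists>g. inj_on g (Func (UNIV::nat set) (Field r)) \<and> g ` Func (UNIV::nat set) (Field r) \<subseteq> Field r"
    by (simp only: card_of_ordLeq[symmetric])
  then obtain g where g: "inj_on g (Func (UNIV::nat set) (Field r))" "g ` Func (UNIV::nat set) (Field r) \<subseteq> Field r"
    by blast
  define F where "F x = g (G x)" for x
  show ?thesis
  proof (intro exI[of _ F] conjI ballI impI)
    show "F ` ?A \<subseteq> Field r" using g(2) G_Func unfolding F_def by blast
  next
    fix \<alpha> \<beta> assume \<alpha>: "\<alpha> \<in> ?A" and \<beta>: "\<beta> \<in> ?A" and ne: "\<alpha> \<noteq> \<beta> \<and> F \<alpha> = F \<beta>"
    have GG: "G \<alpha> = G \<beta>" using ne g(1) G_Func[OF \<alpha>] G_Func[OF \<beta>] unfolding F_def inj_on_def by blast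
    show "\<not> (\<exists>i j. (\<alpha>, t i \<beta>) \<in> ?W \<and> \<alpha> \<noteq> t i \<beta> \<and> (t i \<beta>, t j \<alpha>) \<in> ?W \<and> t i \<beta> \<noteq> t j \<alpha>)"
    proof
      assume "\<exists>i j. (\<alpha>, t i \<beta>) \<in> ?W \<and> \<alpha> \<noteq> t i \<beta> \<and> (t i \<beta>, t j \<alpha>) \<in> ?W \<and> t i \<beta> \<noteq> t j \<alpha>"
      then obtain i j where v1: "lt \<alpha> (t i \<beta>)" and v2: "lt (t i \<beta>) (t j \<alpha>)" unfolding lt_def by blast
      let ?c = "nxt \<alpha>" and ?c' = "nxt \<beta>" and ?\<gamma> = "t i \<beta>"
      have \<gamma>A: "?\<gamma> \<in> ?A" using tA'[OF \<beta>] .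
      have cA: "?c \<in> ?A" and c'A: "?c' \<in> ?A" using nxtA \<alpha> \<beta> by auto
      consider "?c = ?c'" | "lt ?c' ?c" | "lt ?c ?c'" using lt_total[OF c'A cA] by blast
      thus False
      proof cases
        case 1 thus False using e_inj[OF \<alpha> \<beta> 1 G_e[OF GG]] ne by blast
      next
        case 2
        have g1: "lt ?\<gamma> ?c'" using nxt1[OF \<beta>] unfolding cl_def by blast
        have "\<not> lt \<alpha> ?c'"
        proof
          assume "lt \<alpha> ?c'"
          hence "(?c, ?c') \<in> ?W" using nxt2[OF \<alpha>] nxt1[OF \<beta>] by blast
          thus False using 2 lt_irr unfolding lt_def by blast
        qed
        hence "(?c', \<alpha>) \<in> ?W" using lt_total[OF \<alpha> c'A] refl_onD[OF W.REFL c'A] unfolding lt_def by auto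
        hence "lt ?\<gamma> \<alpha>" using le_lt_trans g1 lt_le_trans by blast
        thus False using v1 lt_irr by blast
      next
        case 3
        have "lt (t j \<alpha>) ?c" using nxt1[OF \<alpha>] unfolding cl_def by blast
        hence g1: "lt ?\<gamma> ?c" using v2 lt_trans by blast
        have "(nxt ?\<gamma>, ?c) \<in> ?W" using nxt2[OF \<gamma>A _ g1] nxt1[OF \<alpha>] by blast
        moreover have "(?c, nxt ?\<gamma>) \<in> ?W" using nxt2[OF \<alpha>] nxt1[OF \<gamma>A] lt_trans v1 by blast
        ultimately have nc: "nxt ?\<gamma> = ?c" using W.ANTISYM unfolding antisym_def by blast
        have cc': "?c \<noteq> ?c'" using 3 unfolding lt_def by blast
        have pb: "psi \<beta> i = Some (chi ?c ?c', chi ?c ?c' \<in> f ?c')"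
          unfolding psi_def using nc cc' by simp
        hence pa: "psi \<alpha> i = Some (chi ?c ?c', chi ?c ?c' \<in> f ?c')" using G_psi[OF GG] by simp
        hence "nxt (t i \<alpha>) \<noteq> ?c" and
          "chi (nxt (t i \<alpha>)) ?c = chi ?c ?c'" and "(chi (nxt (t i \<alpha>)) ?c \<in> f ?c) = (chi ?c ?c' \<in> f ?c')"
          unfolding psi_def by (auto split: if_splits)
        thus False using chiP[OF cA c'A cc'] by simp
      qed
    qed
  qed
qed

end
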